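(* Let $f(t)=\sum_{k=0}^{D}c_k\binom{D}{k}t^k(1-t)^{D-k}$ for $t\in[0,1]$. Then: (1) $f'(t)\ge0$ for all $t\in[0,1]$. (2) If the Increasing Conditional Divergence (ICD) condition holds, i.e. $\Delta_i(S)\le\Delta_i(T)$ for all $i\in[D]$ and all $S\subseteq T\subseteq[D]\setminus\{i\}$, then $f''(t)\ge0$ for all $t\in[0,1]$. (3) If moreover the second-order ICD condition holds, i.e. $\Delta_i(S\cup\{j\})-\Delta_i(S)\le\Delta_i(S\cup\{j,\ell\})-\Delta_i(S\cup\{\ell\})$ for all distinct $i,j,\ell\in[D]$ and all $S\subseteq[D]\setminus\{i,j,\ell\}$, then $f^{(3)}(t)\ge0$ for all $t\in[0,1]$.
   Context: Let $\mathcal X$ be a finite alphabet, $D\ge1$, $[D]=\{1,\dots,D\}$, and $p_0,\pi_0$ probability distributions on $\mathcal X^D$ with $\pi_0$ of full support. For $U\subseteq[D]$ let $F(U)=\mathrm{KL}\big(p_0^{(U)}\|\pi_0^{(U)}\big)$, where $p_0^{(U)}$ is the marginal of $p_0$ on the coordinates in $U$, and $F(\emptyset)=0$. For $i\notin U$ let $\Delta_i(U)=F(U\cup\{i\})-F(U)$. For $0\le k\le D$ let $c_k=\binom{D}{k}^{-1}\sum_{|U|=k}F(U)$ (the average of $F$ over subsets of size $k$). *)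

theory Defs
  imports "HOL-Probability.Probability_Mass_Function"
begin

text \<open>Points of X^D are functions 'n => 'a, where the finite type 'n plays the
role of the coordinate set [D] (so D = CARD('n)) and the finite type 'a is the alphabet.\<close>

definition KL :: "'b::finite pmf \<Rightarrow> 'b pmf \<Rightarrow> real" where
  "KL p q = (\<Sum>y\<in>UNIV. pmf p y * ln (pmf p y / pmf q y))"

definition marg :: "'n set \<Rightarrow> ('n \<Rightarrow> 'a) pmf \<Rightarrow> ('n \<Rightarrow> 'a) pmf" where
  "marg U p = map_pmf (\<lambda>x. restrict x U) p"

definition Fdiv :: "('n::finite \<Rightarrow> 'a::finite) pmf \<Rightarrow> ('n \<Rightarrow> 'a) pmf \<Rightarrow> 'n set \<Rightarrow> real" where
  "Fdiv p0 \<pi>0 U = KL (marg U p0) (marg U \<pi>0)"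

definition Delta :: "('n::finite \<Rightarrow> 'a::finite) pmf \<Rightarrow> ('n \<Rightarrow> 'a) pmf \<Rightarrow> 'n \<Rightarrow> 'n set \<Rightarrow> real" where
  "Delta p0 \<pi>0 i U = Fdiv p0 \<pi>0 (insert i U) - Fdiv p0 \<pi>0 U"

definition cavg :: "('n::finite \<Rightarrow> 'a::finite) pmf \<Rightarrow> ('n \<Rightarrow> 'a) pmf \<Rightarrow> nat \<Rightarrow> real" where
  "cavg p0 \<pi>0 k = (\<Sum>U\<in>{U::'n set. card U = k}. Fdiv p0 \<pi>0 U) / real (CARD('n) choose k)"

definition fpoly :: "('n::finite \<Rightarrow> 'a::finite) pmf \<Rightarrow> ('n \<Rightarrow> 'a) pmf \<Rightarrow> real \<Rightarrow> real" where
  "fpoly p0 \<pi>0 t = (\<Sum>k=0..CARD('n). cavg p0 \<pi>0 k * real (CARD('n) choose k)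
                        * t ^ k * (1 - t) ^ (CARD('n) - k))"

definition ICD :: "('n::finite \<Rightarrow> 'a::finite) pmf \<Rightarrow> ('n \<Rightarrow> 'a) pmf \<Rightarrow> bool" where
  "ICD p0 \<pi>0 \<longleftrightarrow> (\<forall>i S T. S \<subseteq> T \<and> T \<subseteq> UNIV - {i} \<longrightarrow> Delta p0 \<pi>0 i S \<le> Delta p0 \<pi>0 i T)"

definition ICD2 :: "('n::finite \<Rightarrow> 'a::finite) pmf \<Rightarrow> ('n \<Rightarrow> 'a) pmf \<Rightarrow> bool" where
  "ICD2 p0 \<pi>0 \<longleftrightarrow> (\<forall>i j l S. i \<noteq> j \<and> i \<noteq> l \<and> j \<noteq> l \<and> S \<subseteq> UNIV - {i, j, l} \<longrightarrow>
      Delta p0 \<pi>0 i (insert j S) - Delta p0 \<pi>0 i S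
        \<le> Delta p0 \<pi>0 i (insert j (insert l S)) - Delta p0 \<pi>0 i (insert l S))"

end

theory Submission
  imports Defs
begin

lemma log_sum:
  fixes p q :: "'b \<Rightarrow> real"
  assumes fin: "finite Y" and p0: "\<And>y. y \<in> Y \<Longrightarrow> p y \<ge> 0" and q0: "\<And>y. y \<in> Y \<Longrightarrow> q y \<ge> 0"
    and pq: "\<And>y. y \<in> Y \<Longrightarrow> p y > 0 \<Longrightarrow> q y > 0"
  shows "(\<Sum>y\<in>Y. p y) * ln ((\<Sum>y\<in>Y. p y) / (\<Sum>y\<in>Y. q y)) \<le> (\<Sum>y\<in>Y. p y * ln (p y / q y))"
proof (cases "(\<Sum>y\<in>Y. p y) = 0")
  case True
  then have "\<forall>y\<in>Y. p y = 0" using sum_nonneg_eq_0_iff[OF fin] p0 by blast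
  then show ?thesis using True by simp
next
  case False
  define Ps where "Ps = (\<Sum>y\<in>Y. p y)"
  define Qs where "Qs = (\<Sum>y\<in>Y. q y)"
  have Psp: "Ps > 0" using False p0 unfolding Ps_def by (simp add: order_le_neq_trans sum_nonneg)
  obtain y0 where y0: "y0 \<in> Y" "p y0 > 0"
    using False p0 unfolding Ps_def by (metis less_eq_real_def sum.neutral)
  have "q y0 \<le> Qs" unfolding Qs_def using fin y0 q0 by (intro member_le_sum) auto
  then have Qsp: "Qs > 0" using pq[OF y0] by linarith
  have key: "p y * ln (p y / q y) - p y * ln (Ps / Qs) \<ge> p y - q y * Ps / Qs" if y: "y \<in> Y" for y
  proof (cases "p y = 0")
    case True then show ?thesis using q0[OF y] Psp Qsp by simp
  next
    case False
    then have py: "p y > 0" using p0[OF y] by simp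
    have qy: "q y > 0" using pq[OF y py] .
    have x: "(q y * Ps) / (p y * Qs) > 0" using py qy Psp Qsp by simp
    have "ln ((q y * Ps) / (p y * Qs)) \<le> (q y * Ps) / (p y * Qs) - 1" using ln_le_minus_one[OF x] .
    moreover have "ln ((q y * Ps) / (p y * Qs)) = - (ln (p y / q y) - ln (Ps / Qs))"
      using py qy Psp Qsp by (simp add: ln_div ln_mult)
    ultimately have "ln (p y / q y) - ln (Ps / Qs) \<ge> 1 - (q y * Ps) / (p y * Qs)" by linarith
    then have "p y * (ln (p y / q y) - ln (Ps / Qs)) \<ge> p y * (1 - (q y * Ps) / (p y * Qs))"
      using py by (intro mult_left_mono) auto
    then show ?thesis using py Qsp by (simp add: algebra_simps)
  qed
  have "(\<Sum>y\<in>Y. p y - q y * Ps / Qs) \<le> (\<Sum>y\<in>Y. p y * ln (p y / q y) - p y * ln (Ps / Qs))"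
    using key by (intro sum_mono) auto
  moreover have "(\<Sum>y\<in>Y. p y - q y * Ps / Qs) = 0"
    using Qsp by (simp add: sum_subtractf sum_divide_distrib[symmetric] sum_distrib_right[symmetric] Ps_def Qs_def)
  moreover have "(\<Sum>y\<in>Y. p y * ln (p y / q y) - p y * ln (Ps / Qs)) = (\<Sum>y\<in>Y. p y * ln (p y / q y)) - Ps * ln (Ps / Qs)"
    by (simp add: sum_subtractf sum_distrib_right[symmetric] Ps_def)
  ultimately show ?thesis unfolding Ps_def Qs_def by linarith
qed

lemma pmf_map_fin: "pmf (map_pmf h (p :: 'b::finite pmf)) z = (\<Sum>y\<in>{y. h y = z}. pmf p y)"
  by (simp add: pmf_map measure_measure_pmf_finite vimage_def)

lemma KL_map:
  fixes p q :: "'b::finite pmf" and h :: "'b \<Rightarrow> 'c::finite"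
  assumes supp: "set_pmf p \<subseteq> set_pmf q"
  shows "KL (map_pmf h p) (map_pmf h q) \<le> KL p q"
proof -
  have "KL (map_pmf h p) (map_pmf h q) = (\<Sum>z\<in>UNIV. (\<Sum>y\<in>{y. h y = z}. pmf p y) * ln ((\<Sum>y\<in>{y. h y = z}. pmf p y) / (\<Sum>y\<in>{y. h y = z}. pmf q y)))"
    unfolding KL_def pmf_map_fin ..
  also have "\<dots> \<le> (\<Sum>z\<in>UNIV. (\<Sum>y\<in>{y. h y = z}. pmf p y * ln (pmf p y / pmf q y)))"
  proof (intro sum_mono log_sum)
    fix z y assume "y \<in> {y. h y = z}" "0 < pmf p y"
    then show "0 < pmf q y" using supp by (metis pmf_positive pmf_nonneg set_pmf_iff subsetD less_eq_real_def)
  qed auto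
  also have "\<dots> = KL p q" unfolding KL_def
    using sum.group[of "UNIV::'b set" "UNIV::'c set" h "\<lambda>y. pmf p y * ln (pmf p y / pmf q y)"] by simp
  finally show ?thesis .
qed

lemma Fdiv_mono:
  fixes p0 \<pi>0 :: "('n::finite \<Rightarrow> 'a::finite) pmf"
  assumes full: "set_pmf \<pi>0 = UNIV" and UV: "U \<subseteq> V"
  shows "Fdiv p0 \<pi>0 U \<le> Fdiv p0 \<pi>0 V"
proof -
  have r: "(\<lambda>x. restrict x U) \<circ> (\<lambda>x. restrict x V) = (\<lambda>x. restrict x U)"
    using UV by (auto simp: restrict_def fun_eq_iff)
  have m: "marg U p = map_pmf (\<lambda>x. restrict x U) (marg V p)" for p :: "('n \<Rightarrow> 'a) pmf"
    unfolding marg_def map_pmf_comp by (metis r comp_def)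
  have s: "set_pmf (marg V p0) \<subseteq> set_pmf (marg V \<pi>0)"
    unfolding marg_def using full by auto
  show ?thesis unfolding Fdiv_def m[of p0] m[of \<pi>0] by (rule KL_map[OF s])
qed


definition P :: "'n set \<Rightarrow> ('n set \<Rightarrow> real) \<Rightarrow> real \<Rightarrow> real" where
  "P A G t = (\<Sum>U\<in>Pow A. G U * t ^ card U * (1 - t) ^ (card A - card U))"

definition dif :: "'n \<Rightarrow> ('n set \<Rightarrow> real) \<Rightarrow> 'n set \<Rightarrow> real" where
  "dif i G U = G (insert i U) - G U"

lemma P_insert:
  assumes fin: "finite A" and a: "a \<notin> A"
  shows "P (insert a A) G t = (1 - t) * P A G t + t * P A (\<lambda>U. G (insert a U)) t"
proof -
  have inj: "inj_on (insert a) (Pow A)" using a by (auto simp: inj_on_def)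
  have dis: "Pow A \<inter> insert a ` Pow A = {}" using a by auto
  have cU: "card U \<le> card A" if "U \<in> Pow A" for U using that fin card_mono by auto
  have "P (insert a A) G t = (\<Sum>U\<in>Pow A. G U * t ^ card U * (1 - t) ^ (card (insert a A) - card U))
      + (\<Sum>U\<in>insert a ` Pow A. G U * t ^ card U * (1 - t) ^ (card (insert a A) - card U))"
    unfolding P_def Pow_insert using fin dis by (intro sum.union_disjoint) auto
  also have "(\<Sum>U\<in>Pow A. G U * t ^ card U * (1 - t) ^ (card (insert a A) - card U)) = (1 - t) * P A G t"
    unfolding P_def sum_distrib_left
  proof (intro sum.cong refl)
    fix U assume "U \<in> Pow A"
    then have "card (insert a A) - card U = Suc (card A - card U)" using cU fin a by (simp add: Suc_diff_le)
    then show "G U * t ^ card U * (1 - t) ^ (card (insert a A) - card U) = (1 - t) * (G U * t ^ card U * (1 - t) ^ (card A - card U))"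
      by simp
  qed
  also have "(\<Sum>U\<in>insert a ` Pow A. G U * t ^ card U * (1 - t) ^ (card (insert a A) - card U)) = t * P A (\<lambda>U. G (insert a U)) t"
    unfolding sum.reindex[OF inj] P_def sum_distrib_left o_def
  proof (intro sum.cong refl)
    fix U assume U: "U \<in> Pow A"
    then have "a \<notin> U" "finite U" using a fin finite_subset by auto
    then have "card (insert a U) = Suc (card U)" by simp
    moreover have "card (insert a A) - Suc (card U) = card A - card U" using fin a by simp
    ultimately show "G (insert a U) * t ^ card (insert a U) * (1 - t) ^ (card (insert a A) - card (insert a U)) = t * (G (insert a U) * t ^ card U * (1 - t) ^ (card A - card U))"
      by simp
  qed
  finally show ?thesis .
qed

lemma P_diff: "P A (\<lambda>U. G1 U - G2 U) t = P A G1 t - P A G2 t"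
  unfolding P_def by (simp add: sum_subtractf[symmetric] algebra_simps)

lemma P_deriv:
  assumes "finite A"
  shows "(P A G has_real_derivative (\<Sum>i\<in>A. P (A - {i}) (dif i G) t)) (at t)"
  using assms
proof (induction A arbitrary: G t rule: finite_induct)
  case empty
  have "P {} G = (\<lambda>t. G {})" by (auto simp: P_def fun_eq_iff)
  then show ?case by simp
next
  case (insert a A)
  have eq: "P (insert a A) G = (\<lambda>t. (1 - t) * P A G t + t * P A (\<lambda>U. G (insert a U)) t)"
    using P_insert[OF insert(1,2)] by (simp add: fun_eq_iff)
  have d: "((\<lambda>t. (1 - t) * P A G t + t * P A (\<lambda>U. G (insert a U)) t) has_real_derivative
      (- P A G t + (1 - t) * (\<Sum>i\<in>A. P (A - {i}) (dif i G) t)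
       + (P A (\<lambda>U. G (insert a U)) t + t * (\<Sum>i\<in>A. P (A - {i}) (dif i (\<lambda>U. G (insert a U))) t)))) (at t)"
    by (rule derivative_eq_intros insert(3) | simp)+
  have s: "(\<Sum>i\<in>insert a A. P (insert a A - {i}) (dif i G) t)
      = P A (dif a G) t + (\<Sum>i\<in>A. P (insert a (A - {i})) (dif i G) t)"
  proof -
    have "(\<Sum>i\<in>insert a A. P (insert a A - {i}) (dif i G) t) = P (insert a A - {a}) (dif a G) t + (\<Sum>i\<in>A. P (insert a A - {i}) (dif i G) t)"
      using insert by simp
    also have "insert a A - {a} = A" using insert by auto
    also have "(\<Sum>i\<in>A. P (insert a A - {i}) (dif i G) t) = (\<Sum>i\<in>A. P (insert a (A - {i})) (dif i G) t)"
      using insert by (intro sum.cong refl) (metis insert_Diff_if singletonD)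
    finally show ?thesis .
  qed
  have s2: "P (insert a (A - {i})) (dif i G) t = (1 - t) * P (A - {i}) (dif i G) t + t * P (A - {i}) (dif i (\<lambda>U. G (insert a U))) t" for i
  proof -
    have "P (insert a (A - {i})) (dif i G) t = (1 - t) * P (A - {i}) (dif i G) t + t * P (A - {i}) (\<lambda>U. dif i G (insert a U)) t"
      using insert by (intro P_insert) auto
    moreover have "(\<lambda>U. dif i G (insert a U)) = dif i (\<lambda>U. G (insert a U))"
      by (auto simp: dif_def fun_eq_iff insert_commute)
    ultimately show ?thesis by simp
  qed
  have pa: "P A (dif a G) t = P A (\<lambda>U. G (insert a U)) t - P A G t"
    unfolding dif_def by (rule P_diff)
  show ?case unfolding eq
  proof (rule DERIV_cong[OF d])
    show "- P A G t + (1 - t) * (\<Sum>i\<in>A. P (A - {i}) (dif i G) t)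
       + (P A (\<lambda>U. G (insert a U)) t + t * (\<Sum>i\<in>A. P (A - {i}) (dif i (\<lambda>U. G (insert a U))) t))
       = (\<Sum>i\<in>insert a A. P (insert a A - {i}) (dif i G) t)"
      unfolding s s2 pa by (simp add: sum.distrib sum_distrib_left sum_subtractf algebra_simps)
  qed
qed

lemma P_nonneg:
  assumes "t \<in> {0..1}" "\<And>U. U \<subseteq> A \<Longrightarrow> G U \<ge> 0"
  shows "P A G t \<ge> 0"
  unfolding P_def using assms by (intro sum_nonneg mult_nonneg_nonneg zero_le_power) auto


lemma fpoly_P:
  fixes p0 \<pi>0 :: "('n::finite \<Rightarrow> 'a::finite) pmf"
  shows "fpoly p0 \<pi>0 = P UNIV (Fdiv p0 \<pi>0)"
proof
  fix t
  let ?F = "Fdiv p0 \<pi>0"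
  let ?D = "CARD('n)"
  have "fpoly p0 \<pi>0 t = (\<Sum>k\<in>{0..?D}. (\<Sum>U\<in>{U\<in>UNIV. card U = k}. ?F U * t ^ card U * (1 - t) ^ (?D - card U)))"
    unfolding fpoly_def
  proof (intro sum.cong refl)
    fix k assume k: "k \<in> {0..?D}"
    then have "real (?D choose k) \<noteq> 0" by simp
    then have "cavg p0 \<pi>0 k * real (?D choose k) = (\<Sum>U\<in>{U::'n set. card U = k}. ?F U)"
      unfolding cavg_def by simp
    then show "cavg p0 \<pi>0 k * real (?D choose k) * t ^ k * (1 - t) ^ (?D - k) = (\<Sum>U\<in>{U\<in>UNIV. card U = k}. ?F U * t ^ card U * (1 - t) ^ (?D - card U))"
      by (simp add: sum_distrib_right)
  qed
  also have "\<dots> = (\<Sum>U\<in>UNIV. ?F U * t ^ card U * (1 - t) ^ (?D - card U))"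
    by (rule sum.group) (auto simp: card_mono)
  also have "\<dots> = P UNIV ?F t" unfolding P_def by simp
  finally show "fpoly p0 \<pi>0 t = P UNIV ?F t" .
qed

theorem mainTheorem6:
  fixes p0 \<pi>0 :: "('n::finite \<Rightarrow> 'a::finite) pmf"
  assumes full: "set_pmf \<pi>0 = UNIV"
  shows "(\<forall>t\<in>{0..1}. deriv (fpoly p0 \<pi>0) t \<ge> 0)
       \<and> (ICD p0 \<pi>0 \<longrightarrow> (\<forall>t\<in>{0..1}. (deriv ^^ 2) (fpoly p0 \<pi>0) t \<ge> 0))
       \<and> (ICD p0 \<pi>0 \<and> ICD2 p0 \<pi>0 \<longrightarrow> (\<forall>t\<in>{0..1}. (deriv ^^ 3) (fpoly p0 \<pi>0) t \<ge> 0))"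
proof -
  define F where "F = Fdiv p0 \<pi>0"
  define A where "A = (UNIV :: 'n set)"
  have finA: "finite B" for B :: "'n set" by simp
  define D1 where "D1 = (\<lambda>t. \<Sum>i\<in>A. P (A - {i}) (dif i F) t)"
  define D2 where "D2 = (\<lambda>t. \<Sum>i\<in>A. \<Sum>j\<in>A - {i}. P (A - {i} - {j}) (dif j (dif i F)) t)"
  define D3 where "D3 = (\<lambda>t. \<Sum>i\<in>A. \<Sum>j\<in>A - {i}. \<Sum>l\<in>A - {i} - {j}. P (A - {i} - {j} - {l}) (dif l (dif j (dif i F))) t)"
  have f: "fpoly p0 \<pi>0 = P A F" unfolding F_def A_def by (rule fpoly_P)
  have d1: "deriv (fpoly p0 \<pi>0) = D1"
    unfolding f D1_def by (rule ext, rule DERIV_imp_deriv, rule P_deriv, simp)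
  have d2: "deriv D1 = D2"
    unfolding D1_def D2_def
    by (rule ext, rule DERIV_imp_deriv, rule DERIV_sum, rule P_deriv, simp)
  have d3: "deriv D2 = D3"
    unfolding D2_def D3_def
    by (rule ext, rule DERIV_imp_deriv, rule DERIV_sum, rule DERIV_sum, rule P_deriv, simp)
  have e2: "(deriv ^^ 2) (fpoly p0 \<pi>0) = D2" using d1 d2 by (simp add: numeral_2_eq_2)
  have e3: "(deriv ^^ 3) (fpoly p0 \<pi>0) = D3" using d1 d2 d3 by (simp add: numeral_3_eq_3)
  have part1: "\<forall>t\<in>{0..1}. D1 t \<ge> 0"
  proof
    fix t :: real assume t: "t \<in> {0..1}"
    show "D1 t \<ge> 0" unfolding D1_def
    proof (intro sum_nonneg P_nonneg[OF t])
      fix i U show "0 \<le> dif i F U" unfolding dif_def F_def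
        using Fdiv_mono[OF full, of U "insert i U" p0] by auto
    qed
  qed
  have part2: "\<forall>t\<in>{0..1}. D2 t \<ge> 0" if icd: "ICD p0 \<pi>0"
  proof
    fix t :: real assume t: "t \<in> {0..1}"
    show "D2 t \<ge> 0" unfolding D2_def
    proof (intro sum_nonneg P_nonneg[OF t])
      fix i j U assume "i \<in> A" "j \<in> A - {i}" "U \<subseteq> A - {i} - {j}"
      then have "U \<subseteq> insert j U" "insert j U \<subseteq> UNIV - {i}" by auto
      then have "Delta p0 \<pi>0 i U \<le> Delta p0 \<pi>0 i (insert j U)" using icd unfolding ICD_def by blast
      then show "0 \<le> dif j (dif i F) U" unfolding dif_def F_def Delta_def by simp
    qed
  qed
  have part3: "\<forall>t\<in>{0..1}. D3 t \<ge> 0" if icd2: "ICD2 p0 \<pi>0"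
  proof
    fix t :: real assume t: "t \<in> {0..1}"
    show "D3 t \<ge> 0" unfolding D3_def
    proof (intro sum_nonneg P_nonneg[OF t])
      fix i j l U assume "i \<in> A" "j \<in> A - {i}" "l \<in> A - {i} - {j}" "U \<subseteq> A - {i} - {j} - {l}"
      then have "i \<noteq> j \<and> i \<noteq> l \<and> j \<noteq> l \<and> U \<subseteq> UNIV - {i, j, l}" by auto
      then have "Delta p0 \<pi>0 i (insert j U) - Delta p0 \<pi>0 i U
        \<le> Delta p0 \<pi>0 i (insert j (insert l U)) - Delta p0 \<pi>0 i (insert l U)"
        using icd2 unfolding ICD2_def by blast
      then show "0 \<le> dif l (dif j (dif i F)) U" unfolding dif_def F_def Delta_def
        by (simp add: insert_commute)
    qed
  qed
  show ?thesis unfolding d1 e2 e3 using part1 part2 part3 by blast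
qed

end
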